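(* For any two finite integer sequences $A$ and $B$, $\mathrm{lcis}(\mathrm{inflate}(A),\mathrm{inflate}(B))=2\cdot\mathrm{lcis}(A,B)$.
   Context: For integer sequences, $\mathrm{lcis}(X_1,\dots,X_k)$ denotes the length of the longest strictly increasing sequence that is a subsequence of each $X_i$. For $A=\langle a_0,\dots,a_{n-1}\rangle$, $\mathrm{inflate}(A)=\langle 2a_0-1,2a_0,2a_1-1,2a_1,\dots,2a_{n-1}-1,2a_{n-1}\rangle$. *)

theory Defs
  imports Main "HOL-Library.Sublist"
begin

definition is_cis :: "int list list \<Rightarrow> int list \<Rightarrow> bool" where
  "is_cis Xs zs \<longleftrightarrow> sorted_wrt (<) zs \<and> (\<forall>X\<in>set Xs. subseq zs X)"

(* length of a longest common increasing subsequence; the set is finite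
   and nonempty (contains []) whenever Xs is nonempty *)
definition lcis :: "int list list \<Rightarrow> nat" where
  "lcis Xs = Max (length ` {zs. is_cis Xs zs})"

definition inflate :: "int list \<Rightarrow> int list" where
  "inflate A = concat (map (\<lambda>a. [2*a - 1, 2*a]) A)"

end

theory Submission
  imports Defs
begin

definition dv :: "int \<Rightarrow> int" where "dv w = (w + 1) div 2"

fun fl :: "int list \<Rightarrow> int list" where
  "fl [] = []"
| "fl [w] = [dv w]"
| "fl (w1 # w2 # rest) = (if dv w1 = dv w2 then dv w1 # fl rest else dv w1 # fl (w2 # rest))"

lemma fl_len: "length ws \<le> 2 * length (fl ws)"
  by (induction ws rule: fl.induct) auto

lemma fl_set: "set (fl ws) \<subseteq> dv ` set ws"
  by (induction ws rule: fl.induct) auto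

lemma dv_mono: "x \<le> y \<Longrightarrow> dv x \<le> dv y"
  unfolding dv_def by (simp add: zdiv_mono1)

lemma dv_lt2: "x + 2 \<le> y \<Longrightarrow> dv x < dv y"
  unfolding dv_def by linarith

lemma fl_sorted: "sorted_wrt (<) ws \<Longrightarrow> sorted_wrt (<) (fl ws)"
proof (induction ws rule: fl.induct)
  case (3 w1 w2 rest)
  show ?case
  proof (cases "dv w1 = dv w2")
    case True
    have "\<forall>z\<in>set (fl rest). dv w1 < z"
    proof
      fix z assume "z \<in> set (fl rest)"
      then obtain r where r: "r \<in> set rest" "z = dv r" using fl_set by blast
      have "w1 < w2" "w2 < r" using 3(3) r by auto
      then show "dv w1 < z" using r dv_lt2[of w1 r] by simp
    qed
    then show ?thesis using True 3 by simp
  next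
    case False
    have "\<forall>z\<in>set (fl (w2 # rest)). dv w1 < z"
    proof
      fix z assume "z \<in> set (fl (w2 # rest))"
      then obtain r where r: "r \<in> set (w2 # rest)" "z = dv r" using fl_set by blast
      have "w1 < w2" "w2 \<le> r" using 3(3) r by auto
      then have "dv w1 \<le> dv w2" "dv w2 \<le> dv r" using dv_mono by auto
      then show "dv w1 < z" using r False by simp
    qed
    then show ?thesis using False 3 by simp
  qed
qed auto

lemma inflate_Cons: "inflate (a # A) = (2*a-1) # (2*a) # inflate A"
  by (simp add: inflate_def)

lemma inflate_Nil: "inflate [] = []"
  by (simp add: inflate_def)

lemma dv1: "dv (2*a-1) = a" unfolding dv_def by simp
lemma dv2: "dv (2*a) = a" unfolding dv_def by simp

lemma fl_subseq:
  "subseq ws (inflate A) \<Longrightarrow> sorted_wrt (<) ws \<Longrightarrow> subseq (fl ws) A"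
proof (induction A arbitrary: ws)
  case Nil
  then show ?case by (cases ws) (auto simp: inflate_Nil)
next
  case (Cons a A)
  show ?case
  proof (cases ws)
    case Nil then show ?thesis by simp
  next
    case (Cons w ws')
    note ws = this
    show ?thesis
    proof (cases "w = 2*a-1")
      case True
      then have s: "subseq ws' (2*a # inflate A)" using Cons.prems ws by (simp add: inflate_Cons)
      show ?thesis
      proof (cases ws')
        case Nil then show ?thesis using ws True by (simp add: dv1)
      next
        case (Cons w2 rest)
        show ?thesis
        proof (cases "w2 = 2*a")
          case True2: True
          then have "subseq rest (inflate A)" using s Cons by simp
          moreover have "sorted_wrt (<) rest" using Cons.prems ws Cons by simp
          ultimately have "subseq (fl rest) A" using Cons.IH by blast
          then show ?thesis using ws Cons True True2 by (simp add: dv1 dv2)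
        next
          case False
          then have "subseq (w2 # rest) (inflate A)" using s Cons by simp
          moreover have "sorted_wrt (<) (w2#rest)" using Cons.prems ws Cons by simp
          ultimately have "subseq (fl (w2#rest)) A" using Cons.IH by blast
          moreover have "w2 > 2*a-1" using Cons.prems ws Cons True by simp
          then have "dv w2 \<noteq> a" using False unfolding dv_def by linarith
          ultimately show ?thesis using ws Cons True by (simp add: dv1)
        qed
      qed
    next
      case F1: False
      show ?thesis
      proof (cases "w = 2*a")
        case True
        then have s: "subseq ws' (inflate A)" using Cons.prems ws F1 by (simp add: inflate_Cons)
        have so: "sorted_wrt (<) ws'" using Cons.prems ws by simp
        have IH: "subseq (fl ws') A" using Cons.IH s so by blast
        show ?thesis
        proof (cases ws')
          case Nil then show ?thesis using ws True by (simp add: dv2)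
        next
          case (Cons w2 rest)
          have "w2 > 2*a" using Cons.prems ws Cons True by simp
          then have "dv w2 \<noteq> a" unfolding dv_def by linarith
          then show ?thesis using ws Cons True IH by (simp add: dv2)
        qed
      next
        case False
        then have "subseq ws (inflate A)" using Cons.prems ws F1 by (simp add: inflate_Cons)
        then have "subseq (fl ws) A" using Cons.IH Cons.prems by blast
        then show ?thesis by (simp add: list_emb_Cons)
      qed
    qed
  qed
qed

lemma inflate_len: "length (inflate zs) = 2 * length zs"
  by (induction zs) (auto simp: inflate_Nil inflate_Cons)

lemma inflate_subseq: "subseq zs A \<Longrightarrow> subseq (inflate zs) (inflate A)"
proof (induction rule: list_emb.induct)
  case (list_emb_Nil ys) then show ?case by (simp add: inflate_Nil)
next
  case (list_emb_Cons xs ys y)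
  then show ?case by (simp add: inflate_Cons list_emb.list_emb_Cons)
next
  case (list_emb_Cons2 x y xs ys)
  then show ?case by (simp add: inflate_Cons)
qed

lemma inflate_set: "x \<in> set (inflate zs) \<Longrightarrow> \<exists>a\<in>set zs. x = 2*a-1 \<or> x = 2*a"
  by (induction zs) (auto simp: inflate_Nil inflate_Cons)

lemma inflate_sorted: "sorted_wrt (<) zs \<Longrightarrow> sorted_wrt (<) (inflate zs)"
proof (induction zs)
  case Nil then show ?case by (simp add: inflate_Nil)
next
  case (Cons a zs)
  have "\<forall>x\<in>set (inflate zs). 2*a < x"
    using Cons.prems inflate_set by fastforce
  then show ?case using Cons by (auto simp: inflate_Cons)
qed

lemma lcis_props:
  assumes "Xs \<noteq> []"
  shows "finite (length ` {zs. is_cis Xs zs})" "length ` {zs. is_cis Xs zs} \<noteq> {}"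
proof -
  obtain X where X: "X \<in> set Xs" using assms by (cases Xs) auto
  have "length ` {zs. is_cis Xs zs} \<subseteq> {..length X}"
    using X by (auto simp: is_cis_def dest!: list_emb_length)
  then show "finite (length ` {zs. is_cis Xs zs})" using finite_subset by blast
  have "is_cis Xs []" by (simp add: is_cis_def)
  then show "length ` {zs. is_cis Xs zs} \<noteq> {}" by blast
qed

theorem lemma9:
  fixes A B :: "int list"
  shows "lcis [inflate A, inflate B] = 2 * lcis [A, B]"
proof -
  let ?S1 = "length ` {zs. is_cis [inflate A, inflate B] zs}"
  let ?S2 = "length ` {zs. is_cis [A, B] zs}"
  have f1: "finite ?S1" "?S1 \<noteq> {}" and f2: "finite ?S2" "?S2 \<noteq> {}"
    using lcis_props[of "[inflate A, inflate B]"] lcis_props[of "[A, B]"] by auto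
  obtain ws where ws: "is_cis [inflate A, inflate B] ws" "length ws = lcis [inflate A, inflate B]"
    using Max_in[OF f1] unfolding lcis_def by auto
  obtain zs where zs: "is_cis [A, B] zs" "length zs = lcis [A, B]"
    using Max_in[OF f2] unfolding lcis_def by auto
  have "is_cis [A, B] (fl ws)"
    using ws(1) fl_sorted fl_subseq unfolding is_cis_def by auto
  then have "length (fl ws) \<le> lcis [A, B]"
    using Max_ge[OF f2(1)] unfolding lcis_def by blast
  then have le1: "lcis [inflate A, inflate B] \<le> 2 * lcis [A, B]"
    using fl_len[of ws] ws(2) by linarith
  have "is_cis [inflate A, inflate B] (inflate zs)"
    using zs(1) inflate_sorted inflate_subseq unfolding is_cis_def by auto
  then have "length (inflate zs) \<le> lcis [inflate A, inflate B]"
    using Max_ge[OF f1(1)] unfolding lcis_def by blast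
  then show ?thesis using le1 zs(2) inflate_len[of zs] by linarith
qed

end
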